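(* In the droplet setting, the scattering coefficient $\alpha:=\int_{D_m}W_m(x)\,dx$ satisfies, as $a\to0$, $$\alpha=-P^2a^{1-h}+\mathcal{O}(a),\qquad P^2:=\frac{-k_0\bigl(\langle1,\overline e_{n_0}\rangle_{L^2(B)}\bigr)^2}{\lambda^B_{n_0}c_{n_0}}\sim1.$$
   Context: $\Omega\subset\mathbb{R}^3$ is a bounded $C^2$ domain. $\phi(\cdot,y)$ is the Neumann function of the Laplacian: $\Delta\phi(\cdot,y)=-\delta_y$ in $\Omega$, $\partial_\nu\phi(\cdot,y)=0$ on $\partial\Omega$; $N^\phi_E(f)(x)=\int_E\phi(x,y)f(y)dy$ on $L^2(E)$ is self-adjoint, compact and positive. $B$ is a smooth bounded domain containing the origin with maximal radius 1, with eigen-pairs $(\lambda^B_n,\overline e_n)$ ($L^2(B)$-orthonormal) of $N^\phi_B$. $D_m=z_m+aB$, $0<a\ll1$, $\rho_1=\rho_0$ a constant, $k_1=k_0a^2$ with $k_0>0$; eigenvalues of $N^\phi_{D_m}$ are $\lambda_n=a^2\lambda^B_n$ with eigenfunctions $e_n$, $\langle1,e_{n}\rangle_{L^2(D_m)}=a^{3/2}\langle1,\overline e_{n}\rangle_{L^2(B)}$. Fix $0<h<1$ and $n_0$. The frequency $\omega$ is chosen such that $k_1-\omega^2\rho_1\lambda_{n_0}=c_{n_0}a^{2+h}$ with a constant $c_{n_0}<0$ independent of $a$ (equivalently $\omega^2=(k_1-c_{n_0}a^{2+h})/(\rho_1\lambda_{n_0})$), and $|k_1-\omega^2\rho_1\lambda_n|\gtrsim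 a^2$ for $n\ne n_0$. $W_m$ solves $\frac{k_1}{\omega^2\rho_1}W_m-N^\phi_{D_m}(W_m)=1$ in $D_m$. *)

theory Defs
  imports "HOL-Analysis.Analysis" "HOL-Library.Landau_Symbols"
begin

type_synonym pt = "real ^ 3"

definition sq_int :: "pt set \<Rightarrow> (pt \<Rightarrow> real) \<Rightarrow> bool" where
  "sq_int D f \<longleftrightarrow> f \<in> borel_measurable lborel \<and> set_integrable lborel D (\<lambda>x. (f x)\<^sup>2)"

definition ip :: "pt set \<Rightarrow> (pt \<Rightarrow> real) \<Rightarrow> (pt \<Rightarrow> real) \<Rightarrow> real" where
  "ip D f g = (LINT x:D|lborel. f x * g x)"

definition Nop :: "(pt \<Rightarrow> pt \<Rightarrow> real) \<Rightarrow> pt set \<Rightarrow> (pt \<Rightarrow> real) \<Rightarrow> pt \<Rightarrow> real" where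
  "Nop \<phi> D f x = (LINT y:D|lborel. \<phi> x y * f y)"

definition droplet :: "pt \<Rightarrow> real \<Rightarrow> pt set \<Rightarrow> pt set" where
  "droplet z a B = (\<lambda>x. z + a *\<^sub>R x) ` B"

text \<open>(lam_n, e_n) is a complete orthonormal eigen-system of N^phi_D on L^2(D),
  with phi a symmetric Hilbert-Schmidt kernel on D x D (so N^phi_D is self-adjoint and compact).\<close>
definition eigensystem ::
  "(pt \<Rightarrow> pt \<Rightarrow> real) \<Rightarrow> pt set \<Rightarrow> (nat \<Rightarrow> real) \<Rightarrow> (nat \<Rightarrow> pt \<Rightarrow> real) \<Rightarrow> bool" where
  "eigensystem \<phi> D lam e \<longleftrightarrow>
     D \<in> sets lborel \<and>
     case_prod \<phi> \<in> borel_measurable (lborel \<Otimes>\<^sub>M lborel) \<and>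
     set_integrable (lborel \<Otimes>\<^sub>M lborel) (D \<times> D) (\<lambda>(x,y). (\<phi> x y)\<^sup>2) \<and>
     (\<forall>x\<in>D. \<forall>y\<in>D. \<phi> x y = \<phi> y x) \<and>
     (\<forall>n. sq_int D (e n)) \<and>
     (\<forall>n m. ip D (e n) (e m) = (if n = m then 1 else 0)) \<and>
     (\<forall>f. sq_int D f \<longrightarrow> (\<lambda>n. (ip D f (e n))\<^sup>2) sums (LINT x:D|lborel. (f x)\<^sup>2)) \<and>
     (\<forall>n. lam n > 0 \<and> (AE x in lborel. x \<in> D \<longrightarrow> Nop \<phi> D (e n) x = lam n * e n x))"

end

theory Submission imports Defs begin

lemma abs_prod_le: "\<bar>(a::real) * b\<bar> \<le> a\<^sup>2 + b\<^sup>2"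
proof -
  have "0 \<le> (\<bar>a\<bar> - \<bar>b\<bar>)\<^sup>2" by simp
  then have "2 * (\<bar>a\<bar> * \<bar>b\<bar>) \<le> \<bar>a\<bar>\<^sup>2 + \<bar>b\<bar>\<^sup>2" by (simp add: power2_eq_square algebra_simps)
  moreover have "0 \<le> \<bar>a\<bar> * \<bar>b\<bar>" by simp
  ultimately show ?thesis unfolding abs_mult power2_abs by linarith
qed

lemma sq_int_meas: "sq_int D f \<Longrightarrow> f \<in> borel_measurable lborel"
  by (simp add: sq_int_def)

lemma sq_int_prod:
  assumes D: "D \<in> sets lborel" and f: "sq_int D f" and g: "sq_int D g"
  shows "set_integrable lborel D (\<lambda>x. f x * g x)"
proof -
  have [measurable]: "f \<in> borel_measurable lborel" "g \<in> borel_measurable lborel"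
    using f g by (auto simp: sq_int_def)
  have "set_integrable lborel D (\<lambda>x. (f x)\<^sup>2 + (g x)\<^sup>2)"
    using f g by (auto simp: sq_int_def)
  moreover have "(\<lambda>x. indicator D x *\<^sub>R (f x * g x)) \<in> borel_measurable lborel"
      using D by measurable
  moreover have "AE x in lborel. norm (indicator D x *\<^sub>R (f x * g x)) \<le> norm (indicator D x *\<^sub>R ((f x)\<^sup>2 + (g x)\<^sup>2))"
    proof (rule AE_I2)
      fix x
      have "\<bar>f x * g x\<bar> \<le> (f x)\<^sup>2 + (g x)\<^sup>2"
        by (rule abs_prod_le)
      then show "norm (indicator D x *\<^sub>R (f x * g x)) \<le> norm (indicator D x *\<^sub>R ((f x)\<^sup>2 + (g x)\<^sup>2))"
        by (auto simp: indicator_def)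
    qed
  ultimately show ?thesis
    unfolding set_integrable_def by (rule Bochner_Integration.integrable_bound)
qed

lemma sq_int_add:
  assumes D: "D \<in> sets lborel" and f: "sq_int D f" and g: "sq_int D g"
  shows "sq_int D (\<lambda>x. f x + g x)"
proof -
  have [measurable]: "f \<in> borel_measurable lborel" "g \<in> borel_measurable lborel"
    using f g by (auto simp: sq_int_def)
  have i: "set_integrable lborel D (\<lambda>x. (f x)\<^sup>2 + 2 * (f x * g x) + (g x)\<^sup>2)"
    using f g sq_int_prod[OF D f g] by (auto simp: sq_int_def)
  have "(\<lambda>x. (f x + g x)\<^sup>2) = (\<lambda>x. (f x)\<^sup>2 + 2 * (f x * g x) + (g x)\<^sup>2)"
    by (auto simp: power2_eq_square algebra_simps)
  with i show ?thesis by (simp add: sq_int_def)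
qed

lemma sq_int_cmult:
  assumes f: "sq_int D f"
  shows "sq_int D (\<lambda>x. c * f x)"
proof -
  have "set_integrable lborel D (\<lambda>x. c\<^sup>2 * (f x)\<^sup>2)"
    using f by (auto simp: sq_int_def)
  then show ?thesis using f by (auto simp: sq_int_def power_mult_distrib)
qed

lemma sq_int_const:
  assumes D: "D \<in> sets lborel" "bounded D"
  shows "sq_int D (\<lambda>_. c)"
proof -
  have "integrable lborel (indicator D :: pt \<Rightarrow> real)"
    using integrable_real_indicator[of D lborel] emeasure_bounded_finite[OF D(2)] D(1) by simp
  then have "integrable lborel (\<lambda>x. c\<^sup>2 * (indicator D x :: real))" by simp
  then show ?thesis
    unfolding sq_int_def set_integrable_def by (simp add: mult.commute)
qed

lemma ip_add:
  assumes D: "D \<in> sets lborel" and f: "sq_int D f" and g: "sq_int D g" and h: "sq_int D k"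
  shows "ip D (\<lambda>x. f x + g x) k = ip D f k + ip D g k"
proof -
  have "ip D (\<lambda>x. f x + g x) k = (LINT x:D|lborel. f x * k x + g x * k x)"
    unfolding ip_def by (simp add: algebra_simps)
  also have "\<dots> = ip D f k + ip D g k"
    unfolding ip_def by (rule set_integral_add(2)[OF sq_int_prod[OF D f h] sq_int_prod[OF D g h]])
  finally show ?thesis .
qed

lemma ip_cmult: "ip D (\<lambda>x. c * f x) k = c * ip D f k"
  unfolding ip_def by (simp add: mult.assoc)

lemma ip_sym: "ip D f g = ip D g f"
  unfolding ip_def by (simp add: mult.commute)

lemma ip_self: "ip D f f = (LINT x:D|lborel. (f x)\<^sup>2)"
  unfolding ip_def by (simp add: power2_eq_square)

lemma polar:
  assumes eig: "eigensystem \<phi> D lam e" and f: "sq_int D f" and g: "sq_int D g"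
  shows "(\<lambda>n. ip D f (e n) * ip D g (e n)) sums ip D f g"
proof -
  have D: "D \<in> sets lborel" and en: "\<And>n. sq_int D (e n)"
    and pars: "\<And>u. sq_int D u \<Longrightarrow> (\<lambda>n. (ip D u (e n))\<^sup>2) sums (LINT x:D|lborel. (u x)\<^sup>2)"
    using eig by (auto simp: eigensystem_def)
  have mg: "sq_int D (\<lambda>x. (-1) * g x)" by (rule sq_int_cmult[OF g])
  have p: "sq_int D (\<lambda>x. f x + g x)" by (rule sq_int_add[OF D f g])
  have m: "sq_int D (\<lambda>x. f x + (-1) * g x)" by (rule sq_int_add[OF D f mg])
  have s1: "(\<lambda>n. (ip D (\<lambda>x. f x + g x) (e n))\<^sup>2) sums ip D (\<lambda>x. f x + g x) (\<lambda>x. f x + g x)"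
    using pars[OF p] by (simp add: ip_self)
  have s2: "(\<lambda>n. (ip D (\<lambda>x. f x + (-1) * g x) (e n))\<^sup>2) sums ip D (\<lambda>x. f x + (-1) * g x) (\<lambda>x. f x + (-1) * g x)"
    using pars[OF m] by (simp only: ip_self)
  have E1: "\<And>k. sq_int D k \<Longrightarrow> ip D (\<lambda>x. f x + g x) k = ip D f k + ip D g k"
    using ip_add[OF D f g] by blast
  have E2: "\<And>k. sq_int D k \<Longrightarrow> ip D (\<lambda>x. f x + (-1) * g x) k = ip D f k - ip D g k"
  proof -
    fix k assume k: "sq_int D k"
    show "ip D (\<lambda>x. f x + (-1) * g x) k = ip D f k - ip D g k"
      using ip_add[OF D f mg k] ip_cmult[of D "-1" g k] by linarith
  qed
  have L: "ip D (\<lambda>x. f x + g x) (\<lambda>x. f x + g x) - ip D (\<lambda>x. f x + (-1) * g x) (\<lambda>x. f x + (-1) * g x) = 4 * ip D f g"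
  proof -
    have a: "ip D (\<lambda>x. f x + g x) (\<lambda>x. f x + g x) = ip D f f + 2 * ip D f g + ip D g g"
      using E1[OF p] E1[OF f] E1[OF g] ip_sym[of D f "\<lambda>x. f x + g x"] ip_sym[of D g "\<lambda>x. f x + g x"] ip_sym[of D g f] by linarith
    have b: "ip D (\<lambda>x. f x + (-1) * g x) (\<lambda>x. f x + (-1) * g x) = ip D f f - 2 * ip D f g + ip D g g"
      using E2[OF m] E2[OF f] E2[OF g] ip_sym[of D f "\<lambda>x. f x + (-1) * g x"] ip_sym[of D g "\<lambda>x. f x + (-1) * g x"] ip_sym[of D g f] by linarith
    show ?thesis using a b by simp
  qed
  have SD: "(\<lambda>n. (ip D (\<lambda>x. f x + g x) (e n))\<^sup>2 - (ip D (\<lambda>x. f x + (-1) * g x) (e n))\<^sup>2) sums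
        (ip D (\<lambda>x. f x + g x) (\<lambda>x. f x + g x) - ip D (\<lambda>x. f x + (-1) * g x) (\<lambda>x. f x + (-1) * g x))"
    by (rule sums_diff[OF s1 s2])
  have EQ: "(ip D (\<lambda>x. f x + g x) (e n))\<^sup>2 - (ip D (\<lambda>x. f x + (-1) * g x) (e n))\<^sup>2
      = 4 * (ip D f (e n) * ip D g (e n))" for n
  proof -
    have "(ip D (\<lambda>x. f x + g x) (e n))\<^sup>2 - (ip D (\<lambda>x. f x + (-1) * g x) (e n))\<^sup>2
      = (ip D f (e n) + ip D g (e n))\<^sup>2 - (ip D f (e n) - ip D g (e n))\<^sup>2"
      by (simp only: E1[OF en] E2[OF en])
    also have "\<dots> = 4 * (ip D f (e n) * ip D g (e n))" by (simp add: power2_eq_square algebra_simps)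
    finally show ?thesis .
  qed
  have "(\<lambda>n. (ip D (\<lambda>x. f x + g x) (e n))\<^sup>2 - (ip D (\<lambda>x. f x + (-1) * g x) (e n))\<^sup>2)
      = (\<lambda>n. 4 * (ip D f (e n) * ip D g (e n)))" by (rule ext) (rule EQ)
  with SD have "(\<lambda>n. 4 * (ip D f (e n) * ip D g (e n))) sums (4 * ip D f g)"
    unfolding L by (simp only:)
  from sums_mult_D[OF this] show ?thesis by simp
qed

lemma selfadj:
  assumes eig: "eigensystem \<phi> D lam e" and W: "sq_int D W" and G: "sq_int D G"
    and eq: "AE x in lborel. x \<in> D \<longrightarrow> Nop \<phi> D W x = G x"
  shows "ip D G (e n) = lam n * ip D W (e n)"
proof -
  from eig have D[measurable]: "D \<in> sets lborel"
    and phim[measurable]: "case_prod \<phi> \<in> borel_measurable (lborel \<Otimes>\<^sub>M lborel)"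
    and phi2: "set_integrable (lborel \<Otimes>\<^sub>M lborel) (D \<times> D) (\<lambda>(x,y). (\<phi> x y)\<^sup>2)"
    and sym: "\<forall>x\<in>D. \<forall>y\<in>D. \<phi> x y = \<phi> y x"
    and en: "sq_int D (e n)"
    and eigv: "AE x in lborel. x \<in> D \<longrightarrow> Nop \<phi> D (e n) x = lam n * e n x"
    unfolding eigensystem_def by auto
  have Wm[measurable]: "W \<in> borel_measurable lborel" and em[measurable]: "e n \<in> borel_measurable lborel"
    and Gm[measurable]: "G \<in> borel_measurable lborel"
    using W en G by (auto simp: sq_int_def)
  define F :: "pt \<Rightarrow> pt \<Rightarrow> real" where "F = (\<lambda>x y. indicator D x * indicator D y * (\<phi> x y * W y * e n x))"
  have Fm: "case_prod F \<in> borel_measurable (lborel \<Otimes>\<^sub>M lborel)" unfolding F_def by measurable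
  have I1: "integrable (lborel \<Otimes>\<^sub>M lborel) (\<lambda>(x,y). indicator D x * indicator D y * (\<phi> x y)\<^sup>2 :: real)"
  proof -
    have "(\<lambda>z. indicator (D \<times> D) z *\<^sub>R (case z of (x,y) \<Rightarrow> (\<phi> x y)\<^sup>2))
       = (\<lambda>(x,y). indicator D x * indicator D y * (\<phi> x y)\<^sup>2 :: real)"
      by (auto simp: fun_eq_iff indicator_times split: prod.split)
    then show ?thesis using phi2 unfolding set_integrable_def by simp
  qed
  have I2: "integrable (lborel \<Otimes>\<^sub>M lborel) (\<lambda>(x,y). indicator D x * indicator D y * ((W y)\<^sup>2 * (e n x)\<^sup>2) :: real)"
  proof (rule lborel_pair.Fubini_integrable)
    show "(\<lambda>(x,y). indicator D x * indicator D y * ((W y)\<^sup>2 * (e n x)\<^sup>2) :: real) \<in> borel_measurable (lborel \<Otimes>\<^sub>M lborel)"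
      by measurable
    have e2: "integrable lborel (\<lambda>x. indicator D x * (e n x)\<^sup>2 :: real)"
      using en unfolding sq_int_def set_integrable_def by simp
    have W2: "integrable lborel (\<lambda>y. indicator D y * (W y)\<^sup>2 :: real)"
      using W unfolding sq_int_def set_integrable_def by simp
    have "(\<lambda>x. \<integral>y. norm ((\<lambda>(x,y). indicator D x * indicator D y * ((W y)\<^sup>2 * (e n x)\<^sup>2) :: real) (x, y)) \<partial>lborel)
        = (\<lambda>x. (indicator D x * (e n x)\<^sup>2) * (\<integral>y. indicator D y * (W y)\<^sup>2 \<partial>lborel))"
    proof
      fix x
      have "(\<integral>y. norm ((\<lambda>(x,y). indicator D x * indicator D y * ((W y)\<^sup>2 * (e n x)\<^sup>2) :: real) (x, y)) \<partial>lborel)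
          = (\<integral>y. (indicator D x * (e n x)\<^sup>2) * (indicator D y * (W y)\<^sup>2) \<partial>lborel)"
        by (rule Bochner_Integration.integral_cong) (auto simp: indicator_def)
      then show "(\<integral>y. norm ((\<lambda>(x,y). indicator D x * indicator D y * ((W y)\<^sup>2 * (e n x)\<^sup>2) :: real) (x, y)) \<partial>lborel)
        = (indicator D x * (e n x)\<^sup>2) * (\<integral>y. indicator D y * (W y)\<^sup>2 \<partial>lborel)" by simp
    qed
    then show "integrable lborel (\<lambda>x. \<integral>y. norm ((\<lambda>(x,y). indicator D x * indicator D y * ((W y)\<^sup>2 * (e n x)\<^sup>2) :: real) (x, y)) \<partial>lborel)"
      using e2 by simp
    show "AE x in lborel. integrable lborel (\<lambda>y. (\<lambda>(x,y). indicator D x * indicator D y * ((W y)\<^sup>2 * (e n x)\<^sup>2) :: real) (x, y))"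
    proof (rule AE_I2)
      fix x
      have "(\<lambda>y. (\<lambda>(x,y). indicator D x * indicator D y * ((W y)\<^sup>2 * (e n x)\<^sup>2) :: real) (x, y))
        = (\<lambda>y. (indicator D x * (e n x)\<^sup>2) * (indicator D y * (W y)\<^sup>2))"
        by (auto simp: fun_eq_iff)
      then show "integrable lborel (\<lambda>y. (\<lambda>(x,y). indicator D x * indicator D y * ((W y)\<^sup>2 * (e n x)\<^sup>2) :: real) (x, y))"
        using W2 by simp
    qed
  qed
  have Fint: "integrable (lborel \<Otimes>\<^sub>M lborel) (case_prod F)"
  proof -
    have "integrable (lborel \<Otimes>\<^sub>M lborel) (\<lambda>z. (\<lambda>(x,y). indicator D x * indicator D y * (\<phi> x y)\<^sup>2 :: real) z
         + (\<lambda>(x,y). indicator D x * indicator D y * ((W y)\<^sup>2 * (e n x)\<^sup>2) :: real) z)"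
      using I1 I2 by (rule Bochner_Integration.integrable_add)
    moreover note Fm
    moreover have "AE z in lborel \<Otimes>\<^sub>M lborel. norm (case_prod F z) \<le> norm ((\<lambda>(x,y). indicator D x * indicator D y * (\<phi> x y)\<^sup>2 :: real) z
         + (\<lambda>(x,y). indicator D x * indicator D y * ((W y)\<^sup>2 * (e n x)\<^sup>2) :: real) z)"
    proof (rule AE_I2)
      fix z :: "pt \<times> pt"
      obtain x y where z: "z = (x,y)" by (cases z)
      have "\<bar>\<phi> x y * (W y * e n x)\<bar> \<le> (\<phi> x y)\<^sup>2 + (W y * e n x)\<^sup>2" by (rule abs_prod_le)
      then show "norm (case_prod F z) \<le> norm ((\<lambda>(x,y). indicator D x * indicator D y * (\<phi> x y)\<^sup>2 :: real) z
         + (\<lambda>(x,y). indicator D x * indicator D y * ((W y)\<^sup>2 * (e n x)\<^sup>2) :: real) z)"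
        unfolding z F_def by (auto simp: indicator_def power_mult_distrib mult.assoc)
    qed
    ultimately show ?thesis by (rule Bochner_Integration.integrable_bound)
  qed
  have fub: "(\<integral>y. (\<integral>x. F x y \<partial>lborel) \<partial>lborel) = (\<integral>x. (\<integral>y. F x y \<partial>lborel) \<partial>lborel)"
    using lborel_pair.Fubini_integral[OF Fint] .
  have iy: "(\<integral>y. F x y \<partial>lborel) = indicator D x * e n x * Nop \<phi> D W x" for x
  proof -
    have "(\<integral>y. F x y \<partial>lborel) = (\<integral>y. (indicator D x * e n x) * (indicator D y *\<^sub>R (\<phi> x y * W y)) \<partial>lborel)"
      unfolding F_def by (rule Bochner_Integration.integral_cong) (auto simp: indicator_def)
    then show ?thesis unfolding Nop_def set_lebesgue_integral_def by simp
  qed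
  have ix: "(\<integral>x. F x y \<partial>lborel) = indicator D y * W y * Nop \<phi> D (e n) y" for y
  proof (cases "y \<in> D")
    case True
    have "(\<integral>x. F x y \<partial>lborel) = (\<integral>x. (indicator D y * W y) * (indicator D x *\<^sub>R (\<phi> y x * e n x)) \<partial>lborel)"
      unfolding F_def using True sym by (intro Bochner_Integration.integral_cong) (auto simp: indicator_def)
    then show ?thesis unfolding Nop_def set_lebesgue_integral_def by simp
  next
    case False
    then show ?thesis unfolding F_def by (simp add: indicator_def)
  qed
  have mfst: "(\<lambda>x. \<integral>y. F x y \<partial>lborel) \<in> borel_measurable lborel"
    using lborel_pair.integrable_fst[OF Fint] by (rule borel_measurable_integrable)
  have msnd: "(\<lambda>y. \<integral>x. F x y \<partial>lborel) \<in> borel_measurable lborel"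
    using lborel_pair.integrable_snd[OF Fint] by (rule borel_measurable_integrable)
  have "ip D G (e n) = (\<integral>x. indicator D x *\<^sub>R (G x * e n x) \<partial>lborel)"
    unfolding ip_def set_lebesgue_integral_def ..
  also have "\<dots> = (\<integral>x. (\<integral>y. F x y \<partial>lborel) \<partial>lborel)"
  proof (rule integral_cong_AE)
    show "(\<lambda>x. indicator D x *\<^sub>R (G x * e n x)) \<in> borel_measurable lborel" by measurable
    show "(\<lambda>x. \<integral>y. F x y \<partial>lborel) \<in> borel_measurable lborel" by (rule mfst)
    show "AE x in lborel. indicator D x *\<^sub>R (G x * e n x) = (\<integral>y. F x y \<partial>lborel)"
      using eq by eventually_elim (auto simp: iy indicator_def)
  qed
  also have "\<dots> = (\<integral>y. (\<integral>x. F x y \<partial>lborel) \<partial>lborel)" using fub by simp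
  also have "\<dots> = (\<integral>y. lam n * (indicator D y *\<^sub>R (W y * e n y)) \<partial>lborel)"
  proof (rule integral_cong_AE)
    show "(\<lambda>y. lam n * (indicator D y *\<^sub>R (W y * e n y))) \<in> borel_measurable lborel" by measurable
    show "(\<lambda>y. \<integral>x. F x y \<partial>lborel) \<in> borel_measurable lborel" by (rule msnd)
    show "AE y in lborel. (\<integral>x. F x y \<partial>lborel) = lam n * (indicator D y *\<^sub>R (W y * e n y))"
      using eigv by eventually_elim (auto simp: ix indicator_def)
  qed
  also have "\<dots> = lam n * ip D W (e n)"
    unfolding ip_def set_lebesgue_integral_def by simp
  finally show ?thesis .
qed

lemma abs_sums_bound:
  fixes r g :: "nat \<Rightarrow> real"
  assumes "r sums s" "g sums G" "\<And>n. \<bar>r n\<bar> \<le> g n"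
  shows "\<bar>s\<bar> \<le> G"
proof -
  have h1: "\<And>n. r n \<le> g n" using assms(3) abs_le_D1 by blast
  have h2: "\<And>n. - r n \<le> g n" using assms(3) abs_le_D2 by blast
  have "s \<le> G" by (rule sums_le[OF h1 assms(1,2)])
  moreover have "- s \<le> G" by (rule sums_le[OF h2 sums_minus[OF assms(1)] assms(2)])
  ultimately show ?thesis by (simp add: abs_le_iff)
qed

lemma gentri: "0 \<le> (v::real) \<Longrightarrow> \<bar>u - v\<bar> \<le> \<bar>u\<bar> + v"
  by arith

lemma gentri2: "\<bar>(u::real)\<bar> \<le> A \<Longrightarrow> A \<le> B \<Longrightarrow> 0 \<le> v \<Longrightarrow> Ka = v + B \<Longrightarrow> \<bar>u - v\<bar> \<le> Ka"
  by arith

lemma droplet_bounded: "bounded B \<Longrightarrow> bounded (droplet z a B)"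
proof -
  assume "bounded B"
  have e: "(\<lambda>x. z + x) ` ((\<lambda>x. a *\<^sub>R x) ` B) = droplet z a B"
    unfolding droplet_def by (rule image_image)
  show ?thesis unfolding e[symmetric] by (rule bounded_translation[OF bounded_scaling[OF \<open>bounded B\<close>]])
qed

theorem lemma4p6:
  fixes \<Omega> B :: "pt set" and \<phi> :: "pt \<Rightarrow> pt \<Rightarrow> real" and z :: pt
    and a0 h k0 \<rho>0 c :: real and n0 :: nat
    and lamB :: "nat \<Rightarrow> real" and eB :: "nat \<Rightarrow> pt \<Rightarrow> real"
    and e :: "real \<Rightarrow> nat \<Rightarrow> pt \<Rightarrow> real"
    and \<omega> :: "real \<Rightarrow> real" and W :: "real \<Rightarrow> pt \<Rightarrow> real"
  assumes \<Omega>: "open \<Omega>" "bounded \<Omega>" "z \<in> \<Omega>"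
    and B: "open B" "bounded B" "0 \<in> B" "(SUP x\<in>B. norm x) = 1"
    and a0: "a0 > 0" "\<forall>a\<in>{0<..<a0}. closure (droplet z a B) \<subseteq> \<Omega>"
    and h: "0 < h" "h < 1"
    and k0: "k0 > 0" and rho0: "\<rho>0 > 0" and c: "c < 0"
    and eigB: "eigensystem \<phi> B lamB eB"
    and eigD: "\<forall>a\<in>{0<..<a0}. eigensystem \<phi> (droplet z a B) (\<lambda>n. a\<^sup>2 * lamB n) (e a)"
    and proj: "\<forall>a\<in>{0<..<a0}. \<forall>n. ip (droplet z a B) (\<lambda>_. 1) (e a n)
                 = a powr (3/2) * ip B (\<lambda>_. 1) (eB n)"
    and freq: "\<forall>a\<in>{0<..<a0}. (\<omega> a)\<^sup>2 = (k0 * a\<^sup>2 - c * a powr (2 + h)) / (\<rho>0 * (a\<^sup>2 * lamB n0))"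
    and gap: "\<exists>C>0. \<forall>a\<in>{0<..<a0}. \<forall>n. n \<noteq> n0 \<longrightarrow>
                 \<bar>k0 * a\<^sup>2 - (\<omega> a)\<^sup>2 * \<rho>0 * (a\<^sup>2 * lamB n)\<bar> \<ge> C * a\<^sup>2"
    and Wsol: "\<forall>a\<in>{0<..<a0}. sq_int (droplet z a B) (W a) \<and>
                 (AE x in lborel. x \<in> droplet z a B \<longrightarrow>
                    (k0 * a\<^sup>2) / ((\<omega> a)\<^sup>2 * \<rho>0) * W a x - Nop \<phi> (droplet z a B) (W a) x = 1)"
  shows "(\<lambda>a. (LINT x:droplet z a B|lborel. W a x)
            + (- k0 * (ip B (\<lambda>_. 1) (eB n0))\<^sup>2 / (lamB n0 * c)) * a powr (1 - h))
         \<in> O[at_right 0](\<lambda>a. a)"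
proof -
  obtain C where C: "C > 0" and Cg: "\<forall>a\<in>{0<..<a0}. \<forall>n. n \<noteq> n0 \<longrightarrow>
                 \<bar>k0 * a\<^sup>2 - (\<omega> a)\<^sup>2 * \<rho>0 * (a\<^sup>2 * lamB n)\<bar> \<ge> C * a\<^sup>2" using gap by blast
  from eigB have Bm: "B \<in> sets lborel" and Lpos: "lamB n0 > 0"
    unfolding eigensystem_def by auto
  define q where "q n = ip B (\<lambda>_. 1) (eB n)" for n
  define mB where "mB = ip B (\<lambda>_. 1) (\<lambda>_. 1)"
  define L where "L = lamB n0"
  have L: "L > 0" using Lpos L_def by simp
  have one_B: "sq_int B (\<lambda>_. 1)" by (rule sq_int_const[OF Bm B(2)])
  have qs: "(\<lambda>n. (q n)\<^sup>2) sums mB"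
    using polar[OF eigB one_B one_B] unfolding q_def mB_def power2_eq_square .
  have mB0: "0 \<le> mB" using sums_le[OF _ sums_zero qs] by simp
  define K where "K = (q n0)\<^sup>2 / L + (k0 - c) * mB / (L * C)"
  have main: "\<bar>(LINT x:droplet z a B|lborel. W a x)
            + (- k0 * (ip B (\<lambda>_. 1) (eB n0))\<^sup>2 / (lamB n0 * c)) * a powr (1 - h)\<bar> \<le> K * a"
    if a: "0 < a" "a < a0" "a < 1" for a
  proof -
    define D where "D = droplet z a B"
    have aa: "a \<in> {0<..<a0}" using a by simp
    have eD: "eigensystem \<phi> D (\<lambda>n. a\<^sup>2 * lamB n) (e a)" using eigD aa D_def by simp
    have Dm: "D \<in> sets lborel" and esq: "\<And>n. sq_int D (e a n)" using eD unfolding eigensystem_def by auto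
    have Db: "bounded D" unfolding D_def by (rule droplet_bounded[OF B(2)])
    have Wsq: "sq_int D (W a)" and Weq: "AE x in lborel. x \<in> D \<longrightarrow>
                    (k0 * a\<^sup>2) / ((\<omega> a)\<^sup>2 * \<rho>0) * W a x - Nop \<phi> D (W a) x = 1"
      using Wsol aa D_def by auto
    define \<Omega> where "\<Omega> = (\<omega> a)\<^sup>2 * \<rho>0"
    have ah: "0 < a powr h" "a powr h \<le> 1" using a h by (auto intro: powr_le1)
    have a2h: "a powr (2 + h) = a\<^sup>2 * a powr h" using a by (simp add: powr_add)
    have fa: "(\<omega> a)\<^sup>2 = (k0 * a\<^sup>2 - c * (a\<^sup>2 * a powr h)) / (\<rho>0 * (a\<^sup>2 * L))"
    proof -
      have "(\<omega> a)\<^sup>2 = (k0 * a\<^sup>2 - c * a powr (2 + h)) / (\<rho>0 * (a\<^sup>2 * lamB n0))"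
        using freq aa by blast
      then show ?thesis unfolding a2h L_def .
    qed
    have "\<Omega> = (k0 * a\<^sup>2 - c * (a\<^sup>2 * a powr h)) / (a\<^sup>2 * L)"
      unfolding \<Omega>_def fa using rho0 a L by (simp add: field_simps)
    also have "\<dots> = (k0 - c * a powr h) / L"
      using a L by (simp add: field_simps power2_eq_square)
    finally have Om: "\<Omega> = (k0 - c * a powr h) / L" .
    have "c * a powr h < 0" by (rule mult_neg_pos[OF c ah(1)])
    then have Opos: "\<Omega> > 0" unfolding Om using L k0 by (intro divide_pos_pos) auto
    have Ole: "\<Omega> \<le> (k0 - c) / L" unfolding Om using L ah c
      by (simp add: divide_right_mono mult_left_mono_neg)
    define \<kappa> where "\<kappa> = (k0 * a\<^sup>2) / ((\<omega> a)\<^sup>2 * \<rho>0)"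
    have one_D: "sq_int D (\<lambda>_. 1)" by (rule sq_int_const[OF Dm Db])
    have s1: "sq_int D (\<lambda>x. \<kappa> * W a x)" by (rule sq_int_cmult[OF Wsq])
    have s2: "sq_int D (\<lambda>x. (-1) * 1)" by (rule sq_int_cmult[OF one_D])
    define G where "G = (\<lambda>x. \<kappa> * W a x + (-1) * 1)"
    have Gsq: "sq_int D G" unfolding G_def by (rule sq_int_add[OF Dm s1 s2])
    have Geq: "AE x in lborel. x \<in> D \<longrightarrow> Nop \<phi> D (W a) x = G x"
      using Weq by eventually_elim (auto simp: G_def \<kappa>_def)
    define w where "w n = ip D (W a) (e a n)" for n
    define p where "p n = ip D (\<lambda>_. 1) (e a n)" for n
    have pq: "p n = a powr (3/2) * q n" for n using proj aa unfolding p_def q_def D_def by simp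
    have rel: "\<kappa> * w n - p n = a\<^sup>2 * lamB n * w n" for n
    proof -
      have "ip D G (e a n) = ip D (\<lambda>x. \<kappa> * W a x) (e a n) + ip D (\<lambda>x. (-1) * 1) (e a n)"
        unfolding G_def by (rule ip_add[OF Dm s1 s2 esq])
      also have "\<dots> = \<kappa> * w n - p n"
        unfolding w_def p_def using ip_cmult[of D \<kappa> "W a" "e a n"] ip_cmult[of D "-1" "\<lambda>_. 1" "e a n"] by simp
      finally show ?thesis using selfadj[OF eD Wsq Gsq Geq, of n] unfolding w_def by simp
    qed
    define d where "d n = k0 * a\<^sup>2 - \<Omega> * (a\<^sup>2 * lamB n)" for n
    have wd: "w n * d n = \<Omega> * p n" for n
    proof -
      have "\<kappa> = k0 * a\<^sup>2 / \<Omega>" unfolding \<kappa>_def \<Omega>_def ..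
      with rel[of n] Opos show ?thesis unfolding d_def by (simp add: field_simps)
    qed
    have wp: "w n * p n = \<Omega> * (p n)\<^sup>2 / d n" if "d n \<noteq> 0" for n
      using wd[of n] that by (simp add: field_simps power2_eq_square)
    have d0: "d n0 = c * a\<^sup>2 * a powr h"
      unfolding d_def Om L_def using Lpos by (simp add: field_simps)
    have dn: "\<bar>d n\<bar> \<ge> C * a\<^sup>2" if "n \<noteq> n0" for n
      using Cg aa that unfolding d_def \<Omega>_def by auto
    have p2: "(p n)\<^sup>2 = a ^ 3 * (q n)\<^sup>2" for n
    proof -
      have "(a powr (3/2))\<^sup>2 = a powr 3" using a by (simp add: power2_eq_square powr_add[symmetric])
      then show ?thesis unfolding pq power_mult_distrib using a by simp
    qed
    define \<alpha> where "\<alpha> = (LINT x:D|lborel. W a x)"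
    define t where "t n = w n * p n" for n
    have ts: "t sums \<alpha>"
      using polar[OF eD Wsq one_D] unfolding t_def w_def p_def \<alpha>_def ip_def by simp
    have rs: "(\<lambda>n. t n - (if n = n0 then t n0 else 0)) sums (\<alpha> - t n0)"
      by (rule sums_diff[OF ts sums_single])
    have gs: "(\<lambda>n. \<Omega> * a / C * (q n)\<^sup>2) sums (\<Omega> * a / C * mB)"
      by (rule sums_mult[OF qs])
    have bnd: "\<bar>t n - (if n = n0 then t n0 else 0)\<bar> \<le> \<Omega> * a / C * (q n)\<^sup>2" for n
    proof (cases "n = n0")
      case True then show ?thesis using Opos a C by simp
    next
      case False
      have Ca: "0 < C * a\<^sup>2" using C a by simp
      have dnz: "d n \<noteq> 0" using dn[OF False] Ca by auto
      have "\<bar>t n\<bar> = \<Omega> * (a ^ 3 * (q n)\<^sup>2) / \<bar>d n\<bar>"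
        unfolding t_def wp[OF dnz] p2 using Opos a by (simp add: abs_mult)
      also have "\<dots> \<le> \<Omega> * (a ^ 3 * (q n)\<^sup>2) / (C * a\<^sup>2)"
        using dn[OF False] Ca Opos a by (intro divide_left_mono) (auto intro!: mult_nonneg_nonneg)
      also have "\<dots> = \<Omega> * a / C * (q n)\<^sup>2" using a C by (simp add: field_simps power2_eq_square power3_eq_cube)
      finally show ?thesis using False by simp
    qed
    have R: "\<bar>\<alpha> - t n0\<bar> \<le> \<Omega> * a / C * mB" by (rule abs_sums_bound[OF rs gs bnd])
    have d0nz: "d n0 \<noteq> 0" using d0 c a ah by simp
    have T0: "t n0 - k0 * (q n0)\<^sup>2 / (L * c) * (a / a powr h) = - (q n0)\<^sup>2 * a / L"
    proof -
      have "t n0 = \<Omega> * (a ^ 3 * (q n0)\<^sup>2) / (c * a\<^sup>2 * a powr h)"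
        unfolding t_def wp[OF d0nz] p2 d0 ..
      also have "\<dots> = (k0 - c * a powr h) * a * (q n0)\<^sup>2 / (L * c * a powr h)"
        unfolding Om using a L c ah by (simp add: field_simps power2_eq_square power3_eq_cube)
      finally have t0: "t n0 = (k0 - c * a powr h) * a * (q n0)\<^sup>2 / (L * c * a powr h)" .
      have "t n0 = (k0 * a * (q n0)\<^sup>2) / (L * c * a powr h) - (q n0)\<^sup>2 * a / L"
        unfolding t0 using L c ah by (simp add: diff_divide_distrib left_diff_distrib)
      then show ?thesis by (simp add: mult.commute mult.left_commute)
    qed
    have ap: "a powr (1 - h) = a / a powr h" using a by (simp add: powr_diff)
    define Y where "Y = k0 * (q n0)\<^sup>2 / (L * c) * (a / a powr h)"
    have Yeq: "(- k0 * (ip B (\<lambda>_. 1) (eB n0))\<^sup>2 / (lamB n0 * c)) * a powr (1 - h) = - Y"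
      unfolding Y_def ap q_def L_def by simp
    have E: "(LINT x:droplet z a B|lborel. W a x)
            + (- k0 * (ip B (\<lambda>_. 1) (eB n0))\<^sup>2 / (lamB n0 * c)) * a powr (1 - h)
          = (\<alpha> - t n0) - (q n0)\<^sup>2 * a / L"
      unfolding Yeq using T0 unfolding Y_def[symmetric] \<alpha>_def D_def by linarith
    have AB: "\<Omega> * a / C * mB \<le> (k0 - c) / L * a / C * mB"
      using Ole a C mB0 by (intro mult_right_mono divide_right_mono mult_right_mono) auto
    have v0: "0 \<le> (q n0)\<^sup>2 * a / L" using a L by simp
    have Ka: "K * a = (q n0)\<^sup>2 * a / L + (k0 - c) / L * a / C * mB"
      using L C unfolding K_def by (simp add: field_simps)
    show ?thesis unfolding E by (rule gentri2[OF R AB v0 Ka])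
  qed
  have ev: "eventually (\<lambda>a. a \<in> {0<..<min a0 1}) (at_right (0::real))"
    by (rule eventually_at_right_real) (use a0 in simp)
  show ?thesis
  proof (rule bigoI[where c = K])
    show "eventually (\<lambda>a. norm ((LINT x:droplet z a B|lborel. W a x)
            + (- k0 * (ip B (\<lambda>_. 1) (eB n0))\<^sup>2 / (lamB n0 * c)) * a powr (1 - h)) \<le> K * norm a) (at_right 0)"
      using ev
    proof eventually_elim
      case (elim a)
      then have "0 < a" "a < a0" "a < 1" by auto
      have na: "\<bar>a\<bar> = a" using \<open>0 < a\<close> by simp
      from main[OF \<open>0 < a\<close> \<open>a < a0\<close> \<open>a < 1\<close>] show ?case unfolding real_norm_def na .
    qed
  qed
qed

end
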